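(* The matrices $C_1$ and $C_2$ are not zero divisors in $F$; that is, for $A\in F$, each of $C_1A=0$, $AC_1=0$, $C_2A=0$, $AC_2=0$ implies $A=0$.
   Context: $K$ is an infinite field of characteristic different from 2. Let $X=\{x_1,x_2,x_1',x_2'\}$ and $Y=\{y_1,y_2,y_1',y_2'\}$, and let $K[X;Y]\cong K[X]\otimes_K E(Y)$ be the free supercommutative algebra: the $x$'s are even commuting variables, the $y$'s are odd and pairwise anticommuting ($y y=0$ for each odd generator), and $E(Y)$ is the Grassmann algebra on the vector space with basis $Y$. Put $C_1=\begin{pmatrix} x_1&y_1\\ y_1'&x_1'\end{pmatrix}$, $C_2=\begin{pmatrix} x_2&y_2\\ y_2'&x_2'\end{pmatrix}\in M_2(K[X;Y])$, and let $F=K[C_1,C_2]$ be the unital $K$-subalgebra of $M_2(K[X;Y])$ generated by $C_1,C_2$ (this is the relatively free algebra of rank 2 of $M_{11}(E)$). *)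

theory Defs
  imports Main "HOL-Library.Poly_Mapping"
begin

text \<open>The free supercommutative algebra K[X;Y] = K[X] (x) E(Y).
  Even variables are indexed by nat (x1 = 0, x2 = 1, x1' = 2, x2' = 3), odd variables likewise
  (y1 = 0, y2 = 1, y1' = 2, y2' = 3).
  A basis monomial is a pair (alpha, S): alpha the exponent vector of the even variables,
  S the (finite) set of odd variables, standing for x^alpha * y_{s1} ... y_{sk} with s1 < ... < sk.\<close>

type_synonym mono = "(nat \<Rightarrow>\<^sub>0 nat) \<times> nat set"
type_synonym 'a sc = "mono \<Rightarrow> 'a"

text \<open>Sign of y_T * y_U = sign * y_(T union U) for disjoint T, U (ordered products).\<close>
definition gsign :: "nat set \<Rightarrow> nat set \<Rightarrow> 'a::ring_1" where
  "gsign T U = (- 1) ^ card {(t, u). t \<in> T \<and> u \<in> U \<and> u < t}"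

definition sc_zero :: "'a::ring_1 sc" where
  "sc_zero = (\<lambda>m. 0)"

definition sc_const :: "'a::ring_1 \<Rightarrow> 'a sc" where
  "sc_const c = (\<lambda>m. if m = (0, {}) then c else 0)"

definition sc_add :: "'a::ring_1 sc \<Rightarrow> 'a sc \<Rightarrow> 'a sc" where
  "sc_add f g = (\<lambda>m. f m + g m)"

definition sc_smult :: "'a::ring_1 \<Rightarrow> 'a sc \<Rightarrow> 'a sc" where
  "sc_smult c f = (\<lambda>m. c * f m)"

definition sc_mult :: "'a::ring_1 sc \<Rightarrow> 'a sc \<Rightarrow> 'a sc" where
  "sc_mult f g = (\<lambda>(\<alpha>, S).
     \<Sum>(\<beta>, \<gamma>) \<in> {(\<beta>, \<gamma>). \<beta> + \<gamma> = \<alpha>}.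
       \<Sum>T \<in> Pow S. gsign T (S - T) * f (\<beta>, T) * g (\<gamma>, S - T))"

definition sc_x :: "nat \<Rightarrow> 'a::ring_1 sc" where
  "sc_x i = (\<lambda>m. if m = (Poly_Mapping.single i 1, {}) then 1 else 0)"

definition sc_y :: "nat \<Rightarrow> 'a::ring_1 sc" where
  "sc_y i = (\<lambda>m. if m = (0, {i}) then 1 else 0)"

text \<open>2x2 matrices over K[X;Y], indexed by bool (False = row/column 1, True = row/column 2).\<close>
type_synonym 'a smat = "bool \<Rightarrow> bool \<Rightarrow> 'a sc"

definition smat_zero :: "'a::ring_1 smat" where
  "smat_zero = (\<lambda>i j. sc_zero)"

definition smat_one :: "'a::ring_1 smat" where
  "smat_one = (\<lambda>i j. if i = j then sc_const 1 else sc_zero)"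

definition smat_add :: "'a::ring_1 smat \<Rightarrow> 'a smat \<Rightarrow> 'a smat" where
  "smat_add A B = (\<lambda>i j. sc_add (A i j) (B i j))"

definition smat_smult :: "'a::ring_1 \<Rightarrow> 'a smat \<Rightarrow> 'a smat" where
  "smat_smult c A = (\<lambda>i j. sc_smult c (A i j))"

definition smat_mult :: "'a::ring_1 smat \<Rightarrow> 'a smat \<Rightarrow> 'a smat" where
  "smat_mult A B = (\<lambda>i j. sc_add (sc_mult (A i False) (B False j)) (sc_mult (A i True) (B True j)))"

definition smat_of :: "'a sc \<Rightarrow> 'a sc \<Rightarrow> 'a sc \<Rightarrow> 'a sc \<Rightarrow> 'a smat" where
  "smat_of a b c d = (\<lambda>i j. if \<not> i then (if \<not> j then a else b) else (if \<not> j then c else d))"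

text \<open>C1 = [[x1, y1], [y1', x1']], C2 = [[x2, y2], [y2', x2']].\<close>
definition C1 :: "'a::ring_1 smat" where
  "C1 = smat_of (sc_x 0) (sc_y 0) (sc_y 2) (sc_x 2)"

definition C2 :: "'a::ring_1 smat" where
  "C2 = smat_of (sc_x 1) (sc_y 1) (sc_y 3) (sc_x 3)"

inductive_set Falg :: "'a::ring_1 smat set" where
  one: "smat_one \<in> Falg"
| gen1: "C1 \<in> Falg"
| gen2: "C2 \<in> Falg"
| add: "A \<in> Falg \<Longrightarrow> B \<in> Falg \<Longrightarrow> smat_add A B \<in> Falg"
| smult: "A \<in> Falg \<Longrightarrow> smat_smult c A \<in> Falg"
| mult: "A \<in> Falg \<Longrightarrow> B \<in> Falg \<Longrightarrow> smat_mult A B \<in> Falg"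

end

theory Submission
  imports Defs
begin

lemma fin_pairs:
  fixes aa :: "nat \<Rightarrow>\<^sub>0 nat"
  shows "finite {(\<beta>::nat \<Rightarrow>\<^sub>0 nat, \<gamma>). \<beta> + \<gamma> = aa}"
proof -
  obtain m :: nat where m_def: "m = (\<Sum>k\<in>Poly_Mapping.keys aa. Poly_Mapping.lookup aa k)" by blast
  obtain K :: "nat set" where K_def: "K = Poly_Mapping.keys aa" by blast
  obtain F :: "(nat \<Rightarrow> nat) set" where F_def: "F = {f. \<forall>x. (x \<in> K \<longrightarrow> f x \<in> {..m}) \<and> (x \<notin> K \<longrightarrow> f x = 0)}" by blast
  have fF: "finite F" unfolding F_def K_def by (rule finite_set_of_finite_funs) auto
  have sub: "Poly_Mapping.lookup ` fst ` {(\<beta>, \<gamma>). \<beta> + \<gamma> = aa} \<subseteq> F"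
  proof
    fix f assume "f \<in> Poly_Mapping.lookup ` fst ` {(\<beta>, \<gamma>). \<beta> + \<gamma> = (aa::nat \<Rightarrow>\<^sub>0 nat)}"
    then obtain \<beta> \<gamma> where f: "f = Poly_Mapping.lookup \<beta>" and e: "\<beta> + \<gamma> = aa" by auto
    have le: "Poly_Mapping.lookup \<beta> x \<le> Poly_Mapping.lookup aa x" for x using e by (metis le_add1 lookup_add)
    have "Poly_Mapping.lookup aa x \<le> m" if "x \<in> Poly_Mapping.keys aa" for x
      unfolding m_def using that by (intro member_le_sum) auto
    then show "f \<in> F" unfolding F_def K_def f using le
      by (auto simp: in_keys_iff) (metis le_trans, metis le_zero_eq)
  qed
  have "finite (Poly_Mapping.lookup ` fst ` {(\<beta>, \<gamma>). \<beta> + \<gamma> = aa})" using fF sub finite_subset by blast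
  then have "finite (fst ` {(\<beta>, \<gamma>). \<beta> + \<gamma> = aa})"
    by (rule finite_imageD) (simp add: inj_on_def poly_mapping_eqI)
  moreover have "inj_on fst {(\<beta>, \<gamma>). \<beta> + \<gamma> = (aa::nat \<Rightarrow>\<^sub>0 nat)}"
    by (auto simp: inj_on_def)
  ultimately show ?thesis using finite_imageD by blast
qed

definition dl :: "mono \<Rightarrow> 'a::ring_1 sc" where "dl m0 = (\<lambda>m. if m = m0 then 1 else 0)"

lemma mult_dl_left:
  assumes "finite S"
  shows "sc_mult (dl (\<beta>0, T0)) g (\<beta>0 + \<gamma>0, S) = (if T0 \<subseteq> S then gsign T0 (S - T0) * g (\<gamma>0, S - T0) else 0)"
proof -
  have inner: "(\<Sum>T \<in> Pow S. gsign T (S - T) * dl (\<beta>0, T0) (\<beta>, T) * g (\<gamma>, S - T))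
     = (if \<beta> = \<beta>0 \<and> T0 \<subseteq> S then gsign T0 (S - T0) * g (\<gamma>, S - T0) else 0)" for \<beta> \<gamma>
  proof -
    have "(\<Sum>T \<in> Pow S. gsign T (S - T) * dl (\<beta>0, T0) (\<beta>, T) * g (\<gamma>, S - T))
       = (\<Sum>T \<in> Pow S. if T = T0 then (if \<beta> = \<beta>0 then gsign T (S - T) * g (\<gamma>, S - T) else 0) else 0)"
      by (rule sum.cong) (auto simp: dl_def)
    also have "\<dots> = (if \<beta> = \<beta>0 \<and> T0 \<subseteq> S then gsign T0 (S - T0) * g (\<gamma>, S - T0) else 0)"
      using assms by (subst sum.delta) auto
    finally show ?thesis .
  qed
  have "sc_mult (dl (\<beta>0, T0)) g (\<beta>0 + \<gamma>0, S) =
     (\<Sum>p \<in> {(\<beta>, \<gamma>). \<beta> + \<gamma> = \<beta>0 + \<gamma>0}. if p = (\<beta>0, \<gamma>0) then (if T0 \<subseteq> S then gsign T0 (S - T0) * g (\<gamma>0, S - T0) else 0) else 0)"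
    unfolding sc_mult_def by (auto simp: inner intro!: sum.cong)
  also have "\<dots> = (if T0 \<subseteq> S then gsign T0 (S - T0) * g (\<gamma>0, S - T0) else 0)"
    using fin_pairs by (subst sum.delta) auto
  finally show ?thesis .
qed

lemma mult_dl_right:
  assumes "finite S"
  shows "sc_mult f (dl (\<beta>0, T0)) (\<gamma>0 + \<beta>0, S) = (if T0 \<subseteq> S then gsign (S - T0) T0 * f (\<gamma>0, S - T0) else 0)"
proof -
  have inner: "(\<Sum>T \<in> Pow S. gsign T (S - T) * f (\<gamma>, T) * dl (\<beta>0, T0) (\<beta>, S - T))
     = (if \<beta> = \<beta>0 \<and> T0 \<subseteq> S then gsign (S - T0) T0 * f (\<gamma>, S - T0) else 0)" for \<beta> \<gamma>
  proof -
    have "(\<Sum>T \<in> Pow S. gsign T (S - T) * f (\<gamma>, T) * dl (\<beta>0, T0) (\<beta>, S - T))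
       = (\<Sum>T \<in> Pow S. if T = S - T0 \<and> T0 \<subseteq> S then (if \<beta> = \<beta>0 then gsign T (S - T) * f (\<gamma>, T) else 0) else 0)"
      by (rule sum.cong) (auto simp: dl_def)
    also have "\<dots> = (if \<beta> = \<beta>0 \<and> T0 \<subseteq> S then gsign (S - T0) T0 * f (\<gamma>, S - T0) else 0)"
      using assms by (cases "T0 \<subseteq> S") (auto simp: double_diff)
    finally show ?thesis .
  qed
  have "sc_mult f (dl (\<beta>0, T0)) (\<gamma>0 + \<beta>0, S) =
     (\<Sum>p \<in> {(\<gamma>, \<beta>). \<gamma> + \<beta> = \<gamma>0 + \<beta>0}. if p = (\<gamma>0, \<beta>0) then (if T0 \<subseteq> S then gsign (S - T0) T0 * f (\<gamma>0, S - T0) else 0) else 0)"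
    unfolding sc_mult_def by (auto simp: inner intro!: sum.cong)
  also have "\<dots> = (if T0 \<subseteq> S then gsign (S - T0) T0 * f (\<gamma>0, S - T0) else 0)"
    using fin_pairs by (subst sum.delta) auto
  finally show ?thesis .
qed


lemma sc_x_dl: "sc_x i = dl (Poly_Mapping.single i 1, {})"
  by (auto simp: sc_x_def dl_def)
lemma sc_y_dl: "sc_y i = dl (0, {i})"
  by (auto simp: sc_y_def dl_def)

lemma gsign_empty1[simp]: "gsign {} S = 1" by (simp add: gsign_def)
lemma gsign_empty2[simp]: "gsign S {} = 1" by (simp add: gsign_def)

lemma left_x: "finite S \<Longrightarrow> sc_mult (sc_x i) g (Poly_Mapping.single i 1 + \<alpha>, S) = g (\<alpha>, S)"
  unfolding sc_x_dl by (subst mult_dl_left) auto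
lemma right_x: "finite S \<Longrightarrow> sc_mult g (sc_x i) (\<alpha> + Poly_Mapping.single i 1, S) = g (\<alpha>, S)"
  unfolding sc_x_dl by (subst mult_dl_right) auto
lemma left_y: "finite S \<Longrightarrow> sc_mult (sc_y i) g (\<alpha>, S) = (if i \<in> S then gsign {i} (S - {i}) * g (\<alpha>, S - {i}) else 0)"
  unfolding sc_y_dl using mult_dl_left[where S=S and ?\<beta>0.0=0 and ?T0.0="{i}" and g=g and ?\<gamma>0.0=\<alpha>] by simp
lemma right_y: "finite S \<Longrightarrow> sc_mult g (sc_y i) (\<alpha>, S) = (if i \<in> S then gsign (S - {i}) {i} * g (\<alpha>, S - {i}) else 0)"
  unfolding sc_y_dl using mult_dl_right[where S=S and ?\<beta>0.0=0 and ?T0.0="{i}" and f=g and ?\<gamma>0.0=\<alpha>] by simp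

definition good :: "'a::ring_1 sc \<Rightarrow> bool" where
  "good f \<longleftrightarrow> (\<forall>\<alpha> S. infinite S \<longrightarrow> f (\<alpha>, S) = 0)"

lemma good_mult: "good (sc_mult f g)"
  unfolding good_def sc_mult_def by (auto intro!: sum.neutral)

lemma good_add: "good f \<Longrightarrow> good g \<Longrightarrow> good (sc_add f g)"
  unfolding good_def sc_add_def by auto

lemma good_smult: "good f \<Longrightarrow> good (sc_smult c f)"
  unfolding good_def sc_smult_def by auto

lemma good_x: "good (sc_x i)" unfolding good_def sc_x_def by auto
lemma good_y: "good (sc_y i)" unfolding good_def sc_y_def by auto
lemma good_zero: "good sc_zero" unfolding good_def sc_zero_def by auto
lemma good_const: "good (sc_const c)" unfolding good_def sc_const_def by auto

lemma Falg_good: "A \<in> Falg \<Longrightarrow> good (A i j)"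
proof (induction A arbitrary: i j rule: Falg.induct)
  case one then show ?case by (auto simp: smat_one_def good_zero good_const)
next
  case gen1 then show ?case by (auto simp: C1_def smat_of_def good_x good_y)
next
  case gen2 then show ?case by (auto simp: C2_def smat_of_def good_x good_y)
next
  case (add A B) then show ?case by (auto simp: smat_add_def good_add)
next
  case (smult A c) then show ?case by (auto simp: smat_smult_def good_smult)
next
  case (mult A B) then show ?case by (auto simp: smat_mult_def good_add good_mult)
qed

lemma core:
  fixes a c :: "'a::ring_1 sc"
  assumes ga: "good a" and gc: "good c"
    and hA: "\<And>\<alpha> S. finite S \<Longrightarrow> a (\<alpha>, S) + (if j \<in> S then s1 S * c (p + \<alpha>, S - {j}) else 0) = 0"
    and hC: "\<And>\<alpha> S. finite S \<Longrightarrow> (if k \<in> S then s2 S * a (q + \<alpha>, S - {k}) else 0) + c (\<alpha>, S) = 0"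
  shows "a = sc_zero \<and> c = sc_zero"
proof -
  have a0: "a (\<alpha>, S) = 0" if "finite S" "j \<notin> S" for \<alpha> S using hA[OF that(1), of \<alpha>] that by simp
  have c0: "c (\<alpha>, S) = 0" if "finite S" "k \<notin> S" for \<alpha> S using hC[OF that(1), of \<alpha>] that by simp
  have a1: "a (\<alpha>, S) = 0" if "finite S" for \<alpha> S
  proof (cases "j \<in> S")
    case True
    have "c (p + \<alpha>, S - {j}) = 0"
    proof (cases "k \<in> S - {j}")
      case True
      have "a (q + (p + \<alpha>), S - {j} - {k}) = 0" using a0 that by auto
      then show ?thesis using hC[of "S - {j}" "p + \<alpha>"] True that by simp
    qed (use c0 that in auto)
    then show ?thesis using hA[OF that, of \<alpha>] True by simp
  qed (use a0 that in auto)
  have c1: "c (\<alpha>, S) = 0" if "finite S" for \<alpha> S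
    using hC[OF that, of \<alpha>] a1[of "S - {k}"] that by (cases "k \<in> S") auto
  show ?thesis using a1 c1 ga gc unfolding good_def sc_zero_def
    by (auto intro!: ext) (metis, metis)
qed


lemma left_lemma:
  fixes a c :: "'a::ring_1 sc"
  assumes ga: "good a" and gc: "good c"
    and e1: "sc_add (sc_mult (sc_x i) a) (sc_mult (sc_y j) c) = sc_zero"
    and e2: "sc_add (sc_mult (sc_y k) a) (sc_mult (sc_x l) c) = sc_zero"
  shows "a = sc_zero \<and> c = sc_zero"
proof (rule core[OF ga gc, where p = "Poly_Mapping.single i 1" and q = "Poly_Mapping.single l 1"
      and j = j and k = k and ?s1.0 = "\<lambda>S. gsign {j} (S - {j})" and ?s2.0 = "\<lambda>S. gsign {k} (S - {k})"])
  fix \<alpha> and S :: "nat set" assume fS: "finite S"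
  have "sc_add (sc_mult (sc_x i) a) (sc_mult (sc_y j) c) (Poly_Mapping.single i 1 + \<alpha>, S) = 0"
    using e1 by (simp add: sc_zero_def)
  then show "a (\<alpha>, S) + (if j \<in> S then gsign {j} (S - {j}) * c (Poly_Mapping.single i 1 + \<alpha>, S - {j}) else 0) = 0"
    using fS left_x[OF fS, of i a \<alpha>] by (auto simp: sc_add_def left_y split: if_splits)
  have "sc_add (sc_mult (sc_y k) a) (sc_mult (sc_x l) c) (Poly_Mapping.single l 1 + \<alpha>, S) = 0"
    using e2 by (simp add: sc_zero_def)
  then show "(if k \<in> S then gsign {k} (S - {k}) * a (Poly_Mapping.single l 1 + \<alpha>, S - {k}) else 0) + c (\<alpha>, S) = 0"
    using fS left_x[OF fS, of l c \<alpha>] by (auto simp: sc_add_def left_y split: if_splits)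
qed

lemma right_lemma:
  fixes a c :: "'a::ring_1 sc"
  assumes ga: "good a" and gc: "good c"
    and e1: "sc_add (sc_mult a (sc_x i)) (sc_mult c (sc_y j)) = sc_zero"
    and e2: "sc_add (sc_mult a (sc_y k)) (sc_mult c (sc_x l)) = sc_zero"
  shows "a = sc_zero \<and> c = sc_zero"
proof (rule core[OF ga gc, where p = "Poly_Mapping.single i 1" and q = "Poly_Mapping.single l 1"
      and j = j and k = k and ?s1.0 = "\<lambda>S. gsign (S - {j}) {j}" and ?s2.0 = "\<lambda>S. gsign (S - {k}) {k}"])
  fix \<alpha> and S :: "nat set" assume fS: "finite S"
  have "sc_add (sc_mult a (sc_x i)) (sc_mult c (sc_y j)) (\<alpha> + Poly_Mapping.single i 1, S) = 0"
    using e1 by (simp add: sc_zero_def)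
  then show "a (\<alpha>, S) + (if j \<in> S then gsign (S - {j}) {j} * c (Poly_Mapping.single i 1 + \<alpha>, S - {j}) else 0) = 0"
    using fS right_x[OF fS, of a i \<alpha>] by (auto simp: sc_add_def right_y add.commute split: if_splits)
  have "sc_add (sc_mult a (sc_y k)) (sc_mult c (sc_x l)) (\<alpha> + Poly_Mapping.single l 1, S) = 0"
    using e2 by (simp add: sc_zero_def)
  then show "(if k \<in> S then gsign (S - {k}) {k} * a (Poly_Mapping.single l 1 + \<alpha>, S - {k}) else 0) + c (\<alpha>, S) = 0"
    using fS right_x[OF fS, of c l \<alpha>] by (auto simp: sc_add_def right_y add.commute split: if_splits)
qed

lemma left_C:
  fixes A :: "'a::ring_1 smat"
  assumes gA: "\<And>i j. good (A i j)"
    and C: "C = smat_of (sc_x i0) (sc_y j0) (sc_y k0) (sc_x l0)"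
    and z: "smat_mult C A = smat_zero"
  shows "A = smat_zero"
proof -
  have "A False j = sc_zero \<and> A True j = sc_zero" for j
  proof (rule left_lemma[OF gA gA, where i = i0 and j = j0 and k = k0 and l = l0])
    show "sc_add (sc_mult (sc_x i0) (A False j)) (sc_mult (sc_y j0) (A True j)) = sc_zero"
      using fun_cong[OF fun_cong[OF z, of False], of j] by (simp add: smat_mult_def smat_zero_def C smat_of_def)
    show "sc_add (sc_mult (sc_y k0) (A False j)) (sc_mult (sc_x l0) (A True j)) = sc_zero"
      using fun_cong[OF fun_cong[OF z, of True], of j] by (simp add: smat_mult_def smat_zero_def C smat_of_def)
  qed
  then show ?thesis unfolding smat_zero_def by (intro ext) (metis (full_types))
qed

lemma right_C:
  fixes A :: "'a::ring_1 smat"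
  assumes gA: "\<And>i j. good (A i j)"
    and C: "C = smat_of (sc_x i0) (sc_y j0) (sc_y k0) (sc_x l0)"
    and z: "smat_mult A C = smat_zero"
  shows "A = smat_zero"
proof -
  have "A i False = sc_zero \<and> A i True = sc_zero" for i
  proof (rule right_lemma[OF gA gA, where i = i0 and j = k0 and k = j0 and l = l0])
    show "sc_add (sc_mult (A i False) (sc_x i0)) (sc_mult (A i True) (sc_y k0)) = sc_zero"
      using fun_cong[OF fun_cong[OF z, of i], of False] by (simp add: smat_mult_def smat_zero_def C smat_of_def)
    show "sc_add (sc_mult (A i False) (sc_y j0)) (sc_mult (A i True) (sc_x l0)) = sc_zero"
      using fun_cong[OF fun_cong[OF z, of i], of True] by (simp add: smat_mult_def smat_zero_def C smat_of_def)
  qed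
  then show ?thesis unfolding smat_zero_def by (intro ext) (metis (full_types))
qed

theorem lemma2:
  fixes A :: "'a::field smat"
  assumes "infinite (UNIV :: 'a set)"
    and "(2::'a) \<noteq> 0"
    and "A \<in> Falg"
  shows "(smat_mult C1 A = smat_zero \<longrightarrow> A = smat_zero)
       \<and> (smat_mult A C1 = smat_zero \<longrightarrow> A = smat_zero)
       \<and> (smat_mult C2 A = smat_zero \<longrightarrow> A = smat_zero)
       \<and> (smat_mult A C2 = smat_zero \<longrightarrow> A = smat_zero)"
proof -
  have g: "\<And>i j. good (A i j)" using Falg_good[OF assms(3)] .
  show ?thesis
    using left_C[where A=A, OF g C1_def] right_C[where A=A, OF g C1_def]
      left_C[where A=A, OF g C2_def] right_C[where A=A, OF g C2_def]
    by blast
qed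

end
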